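(* With notation as below, the chain map $\Phi:\mathbb{G}\to\mathbb{F}$ is not a morphism of dg algebras, but for all $g_1,g_2\in\mathbb{G}$ one has $z\,\Phi(g_1g_2)=\Phi(g_1)\Phi(g_2)$, where products are taken with respect to Gemeda's dg algebra structures on the Taylor resolutions $\mathbb{G}$ and $\mathbb{F}$.
   Context: Let $n\ge1$, $a_1,\ldots,a_n\ge0$, $Q=\Bbbk[z,x_1,\ldots,x_n,y_{i,j}\ (1\le i\le n,1\le j\le a_i)]$, $I=(zx_1,\ldots,zx_n)$, $J=(x_iy_{i,j})$. Order $G(I)$ by $zx_i<zx_j$ iff $i<j$ and $G(J)$ by $x_iy_{i,\ell}<x_jy_{j,p}$ iff $i<j$, or $i=j$ and $\ell<p$. For an ordered generating set and a subset $U$, $m_U=\mathrm{lcm}(U)$. $\mathbb{F}$ (basis $f_V$, $V\subseteq G(I)$) and $\mathbb{G}$ (basis $g_W$, $W\subseteq G(J)$) are the Taylor resolutions of $Q/I$, $Q/J$, with differential $\partial(e_U)=\sum_{u\in U}(-1)^{|\{v\in U:v<u\}|}\frac{m_U}{m_{U\setminus\{u\}}}e_{U\setminus\{u\}}$ and Gemeda product $e_Ve_W=(-1)^{|\{(v,w)\in V\times W:v>w\}|}\frac{m_Vm_W}{m_{V\cup W}}e_{V\cup W}$ if $V\cap W=\emptyset$, and $0$ otherwise. For $W\subseteq G(J)$, $W_z$ is the multiset $\{zx_i:x_iy_{i,j}\in W\}$ ordered as $W$, and $y_W=\mathrm{lcm}\{y_{i,j}:x_iy_{i,j}\in W\}$.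 $\Phi$ is the $Q$-linear map with $\Phi(1)=z$ and $\Phi(g_W)=y_Wf_{W_z}$ for $W\neq\emptyset$, where $f_{W_z}:=0$ if $W_z$ has a repeated element. *)

theory Defs
  imports "HOL-Library.Poly_Mapping"
begin

text \<open>Variables of the polynomial ring Q = k[z, x_1..x_n, y_(i,j)].\<close>
datatype var = Z | X nat | Y nat nat

text \<open>Monomials are exponent vectors; polynomials in Q are finitely supported
  maps from monomials to coefficients in the field k.\<close>
type_synonym monom = "var \<Rightarrow>\<^sub>0 nat"
type_synonym 'k qpoly = "monom \<Rightarrow>\<^sub>0 'k"

definition mpoly :: "monom \<Rightarrow> 'k::comm_ring_1 qpoly" where
  "mpoly m = Poly_Mapping.single m 1"

definition varm :: "var \<Rightarrow> monom" where
  "varm v = Poly_Mapping.single v 1"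

definition mlcm :: "('g \<Rightarrow> monom) \<Rightarrow> 'g set \<Rightarrow> monom" where
  "mlcm mon U = Abs_poly_mapping (\<lambda>v. if U = {} then 0 else Max ((\<lambda>u. Poly_Mapping.lookup (mon u) v) ` U))"

text \<open>Elements of a Taylor resolution: finitely supported Q-combinations of basis
  elements e_U (U a subset of the generators).\<close>
type_synonym ('g,'k) tay = "'g set \<Rightarrow>\<^sub>0 'k qpoly"

definition gemeda_basis ::
  "('g \<Rightarrow> 'g \<Rightarrow> bool) \<Rightarrow> ('g \<Rightarrow> monom) \<Rightarrow> 'g set \<Rightarrow> 'g set \<Rightarrow> ('g,'k::comm_ring_1) tay" where
  "gemeda_basis lt mon V W =
     (if V \<inter> W = {} then
        Poly_Mapping.single (V \<union> W)
          ((- 1) ^ card {(v, w). v \<in> V \<and> w \<in> W \<and> lt w v}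
            * mpoly (mlcm mon V + mlcm mon W - mlcm mon (V \<union> W)))
      else 0)"

definition gemeda_mult ::
  "('g \<Rightarrow> 'g \<Rightarrow> bool) \<Rightarrow> ('g \<Rightarrow> monom) \<Rightarrow> ('g,'k::comm_ring_1) tay \<Rightarrow> ('g,'k) tay \<Rightarrow> ('g,'k) tay" where
  "gemeda_mult lt mon a b =
     (\<Sum>V\<in>Poly_Mapping.keys a. \<Sum>W\<in>Poly_Mapping.keys b.
        Poly_Mapping.map (\<lambda>c. Poly_Mapping.lookup a V * Poly_Mapping.lookup b W * c) (gemeda_basis lt mon V W))"

text \<open>Generators of I: zx_i, indexed by i; of J: x_i y_(i,j), indexed by (i,j).\<close>
definition genI :: "nat \<Rightarrow> nat set" where
  "genI n = {1..n}"

definition genJ :: "nat \<Rightarrow> (nat \<Rightarrow> nat) \<Rightarrow> (nat \<times> nat) set" where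
  "genJ n a = {(i, j). 1 \<le> i \<and> i \<le> n \<and> 1 \<le> j \<and> j \<le> a i}"

definition monI :: "nat \<Rightarrow> monom" where
  "monI i = varm Z + varm (X i)"

definition monJ :: "nat \<times> nat \<Rightarrow> monom" where
  "monJ p = varm (X (fst p)) + varm (Y (fst p) (snd p))"

definition ltI :: "nat \<Rightarrow> nat \<Rightarrow> bool" where
  "ltI i j = (i < j)"

definition ltJ :: "nat \<times> nat \<Rightarrow> nat \<times> nat \<Rightarrow> bool" where
  "ltJ p q = (fst p < fst q \<or> (fst p = fst q \<and> snd p < snd q))"

definition multF :: "(nat,'k::comm_ring_1) tay \<Rightarrow> (nat,'k) tay \<Rightarrow> (nat,'k) tay" where
  "multF = gemeda_mult ltI monI"

definition multG :: "(nat \<times> nat,'k::comm_ring_1) tay \<Rightarrow> (nat \<times> nat,'k) tay \<Rightarrow> (nat \<times> nat,'k) tay" where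
  "multG = gemeda_mult ltJ monJ"

definition yW :: "(nat \<times> nat) set \<Rightarrow> monom" where
  "yW W = (\<Sum>p\<in>W. varm (Y (fst p) (snd p)))"

text \<open>The map Phi on basis elements: Phi(g_empty) = z f_empty, Phi(g_W) = y_W f_(W_z),
  where f_(W_z) = 0 if W_z has a repeated element. If there is no repetition,
  W_z ordered as W is increasing (order on J refines order by i), so no sign.\<close>
definition Phi_basis :: "(nat \<times> nat) set \<Rightarrow> (nat,'k::comm_ring_1) tay" where
  "Phi_basis W =
     (if W = {} then Poly_Mapping.single {} (mpoly (varm Z))
      else if inj_on fst W then Poly_Mapping.single (fst ` W) (mpoly (yW W))
      else 0)"

definition Phi :: "(nat \<times> nat,'k::comm_ring_1) tay \<Rightarrow> (nat,'k) tay" where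
  "Phi b = (\<Sum>W\<in>Poly_Mapping.keys b. Poly_Mapping.map (\<lambda>c. Poly_Mapping.lookup b W * c) (Phi_basis W))"

definition elemsG :: "nat \<Rightarrow> (nat \<Rightarrow> nat) \<Rightarrow> (nat \<times> nat,'k::comm_ring_1) tay set" where
  "elemsG n a = {b. \<forall>W\<in>Poly_Mapping.keys b. W \<subseteq> genJ n a}"

end

theory Submission
  imports Defs
begin


definition sc :: "'b::comm_ring_1 \<Rightarrow> ('a \<Rightarrow>\<^sub>0 'b) \<Rightarrow> ('a \<Rightarrow>\<^sub>0 'b)" where
  "sc c x = Poly_Mapping.map (\<lambda>d. c * d) x"

lemma lookup_sc [simp]: "Poly_Mapping.lookup (sc c x) k = c * Poly_Mapping.lookup x k"
  unfolding sc_def by (simp add: Poly_Mapping.map.rep_eq when_def)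

lemma sc_zero [simp]: "sc c 0 = 0" by (rule poly_mapping_eqI) simp
lemma sc_zero2 [simp]: "sc 0 x = 0" by (rule poly_mapping_eqI) simp
lemma sc_one [simp]: "sc 1 x = x" by (rule poly_mapping_eqI) simp
lemma sc_add: "sc c (x + y) = sc c x + sc c y"
  by (rule poly_mapping_eqI) (simp add: lookup_add algebra_simps)
lemma sc_add2: "sc (c + d) x = sc c x + sc d x"
  by (rule poly_mapping_eqI) (simp add: lookup_add algebra_simps)
lemma sc_sc: "sc c (sc d x) = sc (c * d) x"
  by (rule poly_mapping_eqI) (simp add: algebra_simps)
lemma sc_sum: "sc c (sum f A) = (\<Sum>a\<in>A. sc c (f a))"
  by (rule poly_mapping_eqI) (simp add: lookup_sum sum_distrib_left)
lemma sc_single [simp]: "sc c (Poly_Mapping.single k d) = Poly_Mapping.single k (c * d)"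
  by (rule poly_mapping_eqI) (simp add: lookup_single when_def)
lemma keys_sc: "Poly_Mapping.keys (sc c x) \<subseteq> Poly_Mapping.keys x"
  by (auto simp: in_keys_iff)

lemma Phi_sc_def: "Phi b = (\<Sum>W\<in>Poly_Mapping.keys b. sc (Poly_Mapping.lookup b W) (Phi_basis W))"
  unfolding Phi_def sc_def ..

lemma Phi_superset:
  assumes "finite S" "Poly_Mapping.keys b \<subseteq> S"
  shows "Phi b = (\<Sum>W\<in>S. sc (Poly_Mapping.lookup b W) (Phi_basis W))"
  unfolding Phi_sc_def
  by (rule sum.mono_neutral_left) (use assms in \<open>auto simp: in_keys_iff\<close>)

lemma Phi_zero [simp]: "Phi 0 = 0" by (simp add: Phi_def)

lemma Phi_add: "Phi (x + y) = Phi x + Phi y"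
proof -
  let ?S = "Poly_Mapping.keys x \<union> Poly_Mapping.keys y"
  have k: "Poly_Mapping.keys (x + y) \<subseteq> ?S" by (rule keys_add)
  show ?thesis
    by (subst Phi_superset[OF _ k], simp, subst Phi_superset[of ?S x], simp, simp,
        subst Phi_superset[of ?S y], simp, simp)
       (simp add: lookup_add sc_add2 sum.distrib)
qed

lemma Phi_sc: "Phi (sc c x) = sc c (Phi x)"
  by (subst Phi_superset[of "Poly_Mapping.keys x"], simp, rule keys_sc)
     (simp add: Phi_sc_def sc_sum sc_sc)

lemma Phi_sum: "Phi (sum f A) = (\<Sum>a\<in>A. Phi (f a))"
  by (induction A rule: infinite_finite_induct) (auto simp: Phi_add)

lemma Phi_single: "Phi (Poly_Mapping.single W c) = sc c (Phi_basis W)"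
  by (subst Phi_superset[of "{W}"]) (auto simp: lookup_single)

lemma gm_sc_def: "gemeda_mult lt mon a b = (\<Sum>V\<in>Poly_Mapping.keys a. \<Sum>W\<in>Poly_Mapping.keys b.
        sc (Poly_Mapping.lookup a V * Poly_Mapping.lookup b W) (gemeda_basis lt mon V W))"
  unfolding gemeda_mult_def sc_def ..

lemma gm_superset:
  assumes "finite S1" "Poly_Mapping.keys a \<subseteq> S1" "finite S2" "Poly_Mapping.keys b \<subseteq> S2"
  shows "gemeda_mult lt mon a b = (\<Sum>V\<in>S1. \<Sum>W\<in>S2.
        sc (Poly_Mapping.lookup a V * Poly_Mapping.lookup b W) (gemeda_basis lt mon V W))"
proof -
  have "gemeda_mult lt mon a b = (\<Sum>V\<in>S1. \<Sum>W\<in>Poly_Mapping.keys b.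
        sc (Poly_Mapping.lookup a V * Poly_Mapping.lookup b W) (gemeda_basis lt mon V W))"
    unfolding gm_sc_def
    by (rule sum.mono_neutral_left) (use assms in \<open>auto simp: in_keys_iff\<close>)
  also have "\<dots> = (\<Sum>V\<in>S1. \<Sum>W\<in>S2.
        sc (Poly_Mapping.lookup a V * Poly_Mapping.lookup b W) (gemeda_basis lt mon V W))"
    by (rule sum.cong[OF refl], rule sum.mono_neutral_left) (use assms in \<open>auto simp: in_keys_iff\<close>)
  finally show ?thesis .
qed

lemma gm_zero1 [simp]: "gemeda_mult lt mon 0 b = 0" by (simp add: gemeda_mult_def)
lemma gm_zero2 [simp]: "gemeda_mult lt mon a 0 = 0" by (simp add: gemeda_mult_def)

lemma gm_add1: "gemeda_mult lt mon (x + y) b = gemeda_mult lt mon x b + gemeda_mult lt mon y b"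
proof -
  let ?S = "Poly_Mapping.keys x \<union> Poly_Mapping.keys y"
  let ?T = "Poly_Mapping.keys b"
  have k: "Poly_Mapping.keys (x + y) \<subseteq> ?S" by (rule keys_add)
  show ?thesis
    apply (subst gm_superset[OF _ k, of ?T], simp, simp, simp)
    apply (subst gm_superset[of ?S x ?T], simp, simp, simp, simp)
    apply (subst gm_superset[of ?S y ?T], simp, simp, simp, simp)
    apply (simp add: lookup_add sc_add2 sum.distrib[symmetric] distrib_right)
    done
qed

lemma gm_add2: "gemeda_mult lt mon b (x + y) = gemeda_mult lt mon b x + gemeda_mult lt mon b y"
proof -
  let ?S = "Poly_Mapping.keys x \<union> Poly_Mapping.keys y"
  let ?T = "Poly_Mapping.keys b"
  have k: "Poly_Mapping.keys (x + y) \<subseteq> ?S" by (rule keys_add)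
  show ?thesis
    apply (subst gm_superset[OF _ _ _ k, of ?T], simp, simp, simp)
    apply (subst gm_superset[of ?T b ?S x], simp, simp, simp, simp)
    apply (subst gm_superset[of ?T b ?S y], simp, simp, simp, simp)
    apply (simp add: lookup_add sc_add2 sum.distrib[symmetric] distrib_left)
    done
qed

lemma gm_sc1: "gemeda_mult lt mon (sc c x) b = sc c (gemeda_mult lt mon x b)"
  apply (subst gm_superset[of "Poly_Mapping.keys x" _ "Poly_Mapping.keys b"], simp, rule keys_sc, simp, simp)
  apply (simp add: gm_sc_def sc_sum sc_sc mult.assoc)
  done

lemma gm_sc2: "gemeda_mult lt mon b (sc c x) = sc c (gemeda_mult lt mon b x)"
  apply (subst gm_superset[of "Poly_Mapping.keys b" _ "Poly_Mapping.keys x"], simp, simp, simp, rule keys_sc)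
  apply (simp add: gm_sc_def sc_sum sc_sc algebra_simps)
  done

lemma gm_sum1: "gemeda_mult lt mon (sum f A) b = (\<Sum>a\<in>A. gemeda_mult lt mon (f a) b)"
  by (induction A rule: infinite_finite_induct) (auto simp: gm_add1)
lemma gm_sum2: "gemeda_mult lt mon b (sum f A) = (\<Sum>a\<in>A. gemeda_mult lt mon b (f a))"
  by (induction A rule: infinite_finite_induct) (auto simp: gm_add2)

lemma gm_single: "gemeda_mult lt mon (Poly_Mapping.single A c) (Poly_Mapping.single B d)
   = sc (c * d) (gemeda_basis lt mon A B)"
  by (subst gm_superset[of "{A}" _ "{B}"]) auto




definition sqm :: "var set \<Rightarrow> monom" where
  "sqm A = Abs_poly_mapping (\<lambda>v. if v \<in> A then 1 else 0)"

lemma lookup_sqm: "finite A \<Longrightarrow> Poly_Mapping.lookup (sqm A) v = (if v \<in> A then 1 else 0)"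
  unfolding sqm_def by (subst lookup_Abs_poly_mapping) (auto intro: finite_subset)

lemma sqm_empty [simp]: "sqm {} = 0" by (simp add: sqm_def)

lemma varm_sqm: "varm v = sqm {v}"
  by (rule poly_mapping_eqI) (simp add: lookup_sqm varm_def lookup_single when_def)

lemma sqm_add: "finite A \<Longrightarrow> finite B \<Longrightarrow> A \<inter> B = {} \<Longrightarrow> sqm A + sqm B = sqm (A \<union> B)"
  by (rule poly_mapping_eqI) (auto simp: lookup_sqm lookup_add)

lemma sqm_lcm: "finite A \<Longrightarrow> finite B \<Longrightarrow> sqm A + sqm B - sqm (A \<union> B) = sqm (A \<inter> B)"
  by (rule poly_mapping_eqI) (auto simp: lookup_sqm lookup_add lookup_minus)

lemma mlcm_sqm:
  assumes "finite U" "\<And>u. u \<in> U \<Longrightarrow> mon u = sqm (vs u)" "\<And>u. u \<in> U \<Longrightarrow> finite (vs u)"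
  shows "mlcm mon U = sqm (\<Union>u\<in>U. vs u)"
proof -
  have "(\<lambda>v. if U = {} then 0 else Max ((\<lambda>u. Poly_Mapping.lookup (mon u) v) ` U))
       = (\<lambda>v. if v \<in> (\<Union>u\<in>U. vs u) then 1 else 0)"
  proof
    fix v
    show "(if U = {} then 0 else Max ((\<lambda>u. Poly_Mapping.lookup (mon u) v) ` U))
       = (if v \<in> (\<Union>u\<in>U. vs u) then 1 else 0)"
    proof (cases "v \<in> (\<Union>u\<in>U. vs u)")
      case True
      then obtain u0 where u0: "u0 \<in> U" "v \<in> vs u0" by auto
      have "Max ((\<lambda>u. Poly_Mapping.lookup (mon u) v) ` U) = 1"
      proof (rule Max_eqI)
        show "finite ((\<lambda>u. Poly_Mapping.lookup (mon u) v) ` U)" using assms by simp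
        show "y \<le> 1" if "y \<in> (\<lambda>u. Poly_Mapping.lookup (mon u) v) ` U" for y
          using that assms by (auto simp: lookup_sqm)
        show "1 \<in> (\<lambda>u. Poly_Mapping.lookup (mon u) v) ` U"
          using u0 assms by (force simp: lookup_sqm)
      qed
      then show ?thesis using True u0 by auto
    next
      case False
      then have "(\<lambda>u. Poly_Mapping.lookup (mon u) v) ` U \<subseteq> {0}" using assms by (auto simp: lookup_sqm)
      then have "U \<noteq> {} \<Longrightarrow> (\<lambda>u. Poly_Mapping.lookup (mon u) v) ` U = {0}" by auto
      then show ?thesis using False by auto
    qed
  qed
  then show ?thesis unfolding mlcm_def sqm_def by simp
qed

definition VJ :: "(nat \<times> nat) set \<Rightarrow> var set" where
  "VJ V = (\<Union>p\<in>V. {X (fst p), Y (fst p) (snd p)})"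
definition VI :: "nat set \<Rightarrow> var set" where
  "VI U = (\<Union>i\<in>U. {Z, X i})"

lemma monJ_sqm: "monJ p = sqm {X (fst p), Y (fst p) (snd p)}"
  unfolding monJ_def varm_sqm by (subst sqm_add) (auto simp: insert_commute)
lemma monI_sqm: "monI i = sqm {Z, X i}"
  unfolding monI_def varm_sqm by (subst sqm_add) (auto simp: insert_commute)

lemma mlcmJ: "finite V \<Longrightarrow> mlcm monJ V = sqm (VJ V)"
  unfolding VJ_def by (rule mlcm_sqm) (auto simp: monJ_sqm)
lemma mlcmI: "finite U \<Longrightarrow> mlcm monI U = sqm (VI U)"
  unfolding VI_def by (rule mlcm_sqm) (auto simp: monI_sqm)

lemma finite_VJ: "finite V \<Longrightarrow> finite (VJ V)" by (simp add: VJ_def)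
lemma finite_VI: "finite U \<Longrightarrow> finite (VI U)" by (simp add: VI_def)

lemma mpoly_add: "mpoly (a + b) = (mpoly a * mpoly b :: 'k::comm_ring_1 qpoly)"
  by (simp add: mpoly_def mult_single)
lemma mpoly_zero [simp]: "mpoly 0 = 1" by (simp add: mpoly_def)

lemma basis_empty1: "finite B \<Longrightarrow> (gemeda_basis lt mon {} B :: ('g,'k::comm_ring_1) tay) = Poly_Mapping.single B 1"
  by (simp add: gemeda_basis_def mlcm_def)
lemma basis_empty2: "(gemeda_basis lt mon A {} :: ('g,'k::comm_ring_1) tay) = Poly_Mapping.single A 1"
  by (simp add: gemeda_basis_def mlcm_def)

lemma yW_union: "finite V \<Longrightarrow> finite W \<Longrightarrow> V \<inter> W = {} \<Longrightarrow> yW (V \<union> W) = yW V + yW W"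
  unfolding yW_def by (rule sum.union_disjoint)

abbreviation zz where "zz \<equiv> mpoly (varm Z)"




lemma card_sign:
  assumes fin: "finite V" "finite W" and inj: "inj_on fst (V \<union> W)" and disj: "V \<inter> W = {}"
  shows "card {(v, w). v \<in> V \<and> w \<in> W \<and> ltJ w v} = card {(i, j). i \<in> fst ` V \<and> j \<in> fst ` W \<and> ltI j i}"
proof -
  define S where "S = {(v, w). v \<in> V \<and> w \<in> W \<and> ltJ w v}"
  define T where "T = {(i, j). i \<in> fst ` V \<and> j \<in> fst ` W \<and> ltI j i}"
  have ne: "fst v \<noteq> fst w" if "v \<in> V" "w \<in> W" for v w
  proof
    assume "fst v = fst w"
    moreover have "v \<in> V \<union> W" "w \<in> V \<union> W" using that by auto
    ultimately have "v = w" using inj by (simp add: inj_on_eq_iff)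
    then show False using disj that by auto
  qed
  have img: "map_prod fst fst ` S = T"
  proof
    show "map_prod fst fst ` S \<subseteq> T"
    proof
      fix x assume "x \<in> map_prod fst fst ` S"
      then obtain p where p: "p \<in> S" "x = map_prod fst fst p" by (rule imageE) simp
      obtain v w where pv: "p = (v, w)" by (cases p)
      have h: "v \<in> V" "w \<in> W" "ltJ w v" using p(1) pv by (simp_all add: S_def)
      have "fst v \<noteq> fst w" using ne[OF h(1) h(2)] .
      then have "ltI (fst w) (fst v)" using h(3) by (auto simp: ltJ_def ltI_def)
      then show "x \<in> T" using h p(2) pv by (simp add: T_def)
    qed
    show "T \<subseteq> map_prod fst fst ` S"
    proof
      fix x assume "x \<in> T"
      then obtain i j where x: "x = (i, j)" "i \<in> fst ` V" "j \<in> fst ` W" "ltI j i"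
        by (auto simp: T_def)
      obtain v where v: "v \<in> V" "i = fst v" using x(2) by (rule imageE) simp
      obtain w where w: "w \<in> W" "j = fst w" using x(3) by (rule imageE) simp
      have h: "v \<in> V" "w \<in> W" "i = fst v" "j = fst w" using v w by simp_all
      have "(v, w) \<in> S" using h x by (simp add: S_def ltJ_def ltI_def)
      moreover have "x = map_prod fst fst (v, w)" using h x by simp
      ultimately show "x \<in> map_prod fst fst ` S" by (rule image_eqI[rotated])
    qed
  qed
  have injS: "inj_on (map_prod fst fst) S"
  proof (rule inj_onI)
    fix p q assume pq: "p \<in> S" "q \<in> S" "map_prod fst fst p = map_prod fst fst q"
    obtain v w where pv: "p = (v, w)" by (cases p)
    obtain v' w' where qv: "q = (v', w')" by (cases q)
    have h: "v \<in> V" "w \<in> W" "v' \<in> V" "w' \<in> W" using pq pv qv by (simp_all add: S_def)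
    have e: "fst v = fst v'" "fst w = fst w'" using pq(3) pv qv by simp_all
    have "v = v'" using inj e(1) h(1,3) by (simp add: inj_on_eq_iff)
    moreover have "w = w'" using inj e(2) h(2,4) by (simp add: inj_on_eq_iff)
    ultimately show "p = q" using pv qv by simp
  qed
  have "card T = card S" using card_image[OF injS] img by simp
  then show ?thesis by (simp add: S_def T_def)
qed

lemma VJ_Un: "VJ (A \<union> B) = VJ A \<union> VJ B" by (auto simp: VJ_def)
lemma VI_Un: "VI (A \<union> B) = VI A \<union> VI B" by (auto simp: VI_def)

lemma basis_key:
  assumes fin: "finite V" "finite W"
  shows "sc zz (Phi (gemeda_basis ltJ monJ V W)) =
         gemeda_mult ltI monI (Phi_basis V) (Phi_basis W :: (nat,'k::comm_ring_1) tay)"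
proof (cases "V \<inter> W = {}")
  case False
  then have ne: "V \<noteq> {}" "W \<noteq> {}" by auto
  have L: "gemeda_basis ltJ monJ V W = (0 :: (nat \<times> nat,'k) tay)"
    using False by (simp add: gemeda_basis_def)
  show ?thesis
  proof (cases "inj_on fst V \<and> inj_on fst W")
    case True
    have "fst ` V \<inter> fst ` W \<noteq> {}" using False by auto
    then have "gemeda_basis ltI monI (fst ` V) (fst ` W) = (0 :: (nat,'k) tay)"
      by (simp add: gemeda_basis_def)
    then show ?thesis using True ne L by (simp add: Phi_basis_def gm_single)
  next
    case False
    then show ?thesis using ne L by (auto simp: Phi_basis_def)
  qed
next
  case disj: True
  show ?thesis
  proof (cases "V = {}")
    case True
    then have b: "gemeda_basis ltJ monJ V W = (Poly_Mapping.single W 1 :: (nat \<times> nat,'k) tay)"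
      using fin by (simp add: basis_empty1)
    show ?thesis
      using True fin
      by (auto simp: b Phi_single Phi_basis_def gm_single basis_empty1 basis_empty2 mult.commute)
  next
    case Vne: False
    show ?thesis
    proof (cases "W = {}")
      case True
      then have b: "gemeda_basis ltJ monJ V W = (Poly_Mapping.single V 1 :: (nat \<times> nat,'k) tay)"
        by (simp add: basis_empty2)
      show ?thesis
        using True Vne fin
        by (auto simp: b Phi_single Phi_basis_def gm_single basis_empty1 basis_empty2 mult.commute)
    next
      case Wne: False
      show ?thesis
      proof (cases "inj_on fst (V \<union> W)")
        case True
        then have injV: "inj_on fst V" and injW: "inj_on fst W"
          by (auto intro: inj_on_subset)
        have fdisj: "fst ` V \<inter> fst ` W = {}"
        proof (rule ccontr)
          assume "fst ` V \<inter> fst ` W \<noteq> {}"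
          then obtain v w where "v \<in> V" "w \<in> W" "fst v = fst w" by auto
          then have "v = w" using True by (auto dest: inj_onD)
          then show False using disj \<open>v \<in> V\<close> \<open>w \<in> W\<close> by auto
        qed
        have VJd: "VJ V \<inter> VJ W = {}" using disj fdisj by (auto simp: VJ_def)
        have VId: "VI (fst ` V) \<inter> VI (fst ` W) = {Z}"
          using fdisj Vne Wne by (auto simp: VI_def)
        define s :: "'k qpoly" where "s = (- 1) ^ card {(v, w). v \<in> V \<and> w \<in> W \<and> ltJ w v}"
        have cs: "card {(i, j). i \<in> fst ` V \<and> j \<in> fst ` W \<and> ltI j i} = card {(v, w). v \<in> V \<and> w \<in> W \<and> ltJ w v}"
          using card_sign[OF fin True disj] by simp
        have mJ: "mlcm monJ V + mlcm monJ W - mlcm monJ (V \<union> W) = 0"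
          using fin by (simp only: mlcmJ finite_Un VJ_Un sqm_lcm[OF finite_VJ finite_VJ] VJd sqm_empty)
        have mI: "mlcm monI (fst ` V) + mlcm monI (fst ` W) - mlcm monI (fst ` V \<union> fst ` W) = varm Z"
          using fin by (simp only: mlcmI finite_Un finite_imageI VI_Un sqm_lcm[OF finite_VI finite_VI] VId varm_sqm)
        have bJ: "gemeda_basis ltJ monJ V W = (Poly_Mapping.single (V \<union> W) s :: (nat \<times> nat,'k) tay)"
          using disj by (simp add: gemeda_basis_def mJ s_def)
        have bI: "gemeda_basis ltI monI (fst ` V) (fst ` W) = (Poly_Mapping.single (fst ` V \<union> fst ` W) (s * zz) :: (nat,'k) tay)"
          using fdisj by (simp add: gemeda_basis_def mI cs s_def)
        show ?thesis
          using Vne Wne injV injW True fin disj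
          by (simp add: bJ bI Phi_single Phi_basis_def gm_single image_Un yW_union mpoly_add algebra_simps)
      next
        case False
        have L: "Phi_basis (V \<union> W) = (0 :: (nat,'k) tay)" using False Vne by (simp add: Phi_basis_def)
        have LL: "Phi (gemeda_basis ltJ monJ V W :: (nat \<times> nat,'k) tay) = 0"
          using disj by (simp add: gemeda_basis_def Phi_single L)
        show ?thesis
        proof (cases "inj_on fst V \<and> inj_on fst W")
          case True
          then have "fst ` V \<inter> fst ` W \<noteq> {}" using False disj
            by (auto simp: inj_on_Un)
          then have "gemeda_basis ltI monI (fst ` V) (fst ` W) = (0 :: (nat,'k) tay)"
            by (simp add: gemeda_basis_def)
          then show ?thesis using True Vne Wne LL by (simp add: Phi_basis_def gm_single)
        next
          case False
          then show ?thesis using Vne Wne LL by (auto simp: Phi_basis_def)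
        qed
      qed
    qed
  qed
qed




lemma finite_genJ: "finite (genJ n a)"
proof -
  have "genJ n a \<subseteq> (SIGMA i:{1..n}. {1..a i})" by (auto simp: genJ_def)
  then show ?thesis by (rule finite_subset) auto
qed

lemma zz_ne: "(zz :: 'k::field qpoly) \<noteq> zz * zz"
proof
  assume "(zz :: 'k qpoly) = zz * zz"
  then have "mpoly (varm Z) = (mpoly (varm Z + varm Z) :: 'k qpoly)" by (simp add: mpoly_add)
  then have "Poly_Mapping.lookup (mpoly (varm Z) :: 'k qpoly) (varm Z) = Poly_Mapping.lookup (mpoly (varm Z + varm Z) :: 'k qpoly) (varm Z)" by simp
  then have "varm Z = varm Z + varm Z" by (simp add: mpoly_def lookup_single when_def split: if_splits)
  then have "Poly_Mapping.lookup (varm Z) Z = Poly_Mapping.lookup (varm Z + varm Z) Z" by simp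
  then show False by (simp add: varm_def lookup_add)
qed

theorem mainTheorem10:
  fixes n :: nat and a :: "nat \<Rightarrow> nat"
  assumes "n \<ge> 1"
  shows "(\<exists>g1 \<in> elemsG n a. \<exists>g2 \<in> elemsG n a.
            Phi (multG g1 g2) \<noteq> multF (Phi g1) (Phi g2 :: (nat, 'k::field) tay))
       \<and> (\<forall>g1 \<in> elemsG n a. \<forall>g2 \<in> elemsG n a.
            Poly_Mapping.map (\<lambda>c. mpoly (varm Z) * c) (Phi (multG g1 g2))
              = multF (Phi g1) (Phi g2 :: (nat, 'k::field) tay))"
proof
  let ?g = "Poly_Mapping.single {} 1 :: (nat \<times> nat, 'k) tay"
  have gin: "?g \<in> elemsG n a" by (simp add: elemsG_def)
  have "Phi (multG ?g ?g) = Poly_Mapping.single {} (zz :: 'k qpoly)"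
    by (simp add: multG_def gm_single basis_empty1 Phi_single Phi_basis_def)
  moreover have "multF (Phi ?g) (Phi ?g) = Poly_Mapping.single {} (zz * zz :: 'k qpoly)"
    by (simp add: multF_def gm_single basis_empty1 Phi_single Phi_basis_def)
  ultimately have "Phi (multG ?g ?g) \<noteq> multF (Phi ?g) (Phi ?g)"
    using zz_ne by (metis lookup_single_eq)
  then show "\<exists>g1 \<in> elemsG n a. \<exists>g2 \<in> elemsG n a.
            Phi (multG g1 g2) \<noteq> multF (Phi g1) (Phi g2 :: (nat, 'k::field) tay)"
    using gin by blast
next
  show "\<forall>g1 \<in> elemsG n a. \<forall>g2 \<in> elemsG n a.
            Poly_Mapping.map (\<lambda>c. mpoly (varm Z) * c) (Phi (multG g1 g2))
              = multF (Phi g1) (Phi g2 :: (nat, 'k::field) tay)"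
  proof (intro ballI)
    fix g1 g2 :: "(nat \<times> nat, 'k) tay"
    assume g1: "g1 \<in> elemsG n a" and g2: "g2 \<in> elemsG n a"
    have finV: "finite V" if "V \<in> Poly_Mapping.keys g1" for V
      using g1 that finite_subset[OF _ finite_genJ[of n a]] by (auto simp: elemsG_def)
    have finW: "finite W" if "W \<in> Poly_Mapping.keys g2" for W
      using g2 that finite_subset[OF _ finite_genJ[of n a]] by (auto simp: elemsG_def)
    have "Poly_Mapping.map (\<lambda>c. mpoly (varm Z) * c) (Phi (multG g1 g2))
        = sc zz (Phi (multG g1 g2))" by (simp add: sc_def)
    also have "\<dots> = (\<Sum>V\<in>Poly_Mapping.keys g1. \<Sum>W\<in>Poly_Mapping.keys g2.
        sc (Poly_Mapping.lookup g1 V * Poly_Mapping.lookup g2 W) (sc zz (Phi (gemeda_basis ltJ monJ V W))))"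
      by (simp add: multG_def gm_sc_def Phi_sum Phi_sc sc_sum sc_sc mult.commute)
    also have "\<dots> = (\<Sum>V\<in>Poly_Mapping.keys g1. \<Sum>W\<in>Poly_Mapping.keys g2.
        sc (Poly_Mapping.lookup g1 V * Poly_Mapping.lookup g2 W) (gemeda_mult ltI monI (Phi_basis V) (Phi_basis W)))"
      by (intro sum.cong refl, simp add: basis_key finV finW)
    also have "\<dots> = multF (Phi g1) (Phi g2)"
      by (simp add: multF_def Phi_sc_def gm_sum1 gm_sum2 gm_sc1 gm_sc2 sc_sum sc_sc mult.commute) (rule sum.swap)
    finally show "Poly_Mapping.map (\<lambda>c. mpoly (varm Z) * c) (Phi (multG g1 g2))
              = multF (Phi g1) (Phi g2)" .
  qed
qed


end
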